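(* For all $l=1,\ldots,n-3$ and $m,s=1,\ldots,N$, the operator-valued monodromy matrix $\hat M_{[k]}$ satisfies \[ \nabla_{\boldsymbol\sigma_l,m} \nabla_{\boldsymbol\sigma_l,s}^{-1} \hat M_{[k]} = \hat M_{[k]} \nabla_{\boldsymbol\sigma_l,m} \nabla_{\boldsymbol\sigma_l,s}^{-1} \,. \] Equivalently, $\hat M_{[k]}$ is invariant under shifts of any $\boldsymbol\sigma_l$ by vectors of the root lattice of $\mathfrak{sl}_N$ (vectors in $\mathbb Z^N$ with vanishing sum of components).
   Context: Setting: $W_N$-algebra with central charge $c=N-1$; semi-degenerate conformal blocks on the sphere with generic punctures at $z_0=0$ (weight $\boldsymbol\theta_0$) and $z_{n-1}=\infty$ (weight $\boldsymbol\theta_{n-1}$), semi-degenerate fields $V_{a_k}(z_k)$ with weights $a_k\boldsymbol h_1$ at $z_1,\ldots,z_{n-2}$, and intermediate weights $\boldsymbol\sigma_1,\ldots,\boldsymbol\sigma_{n-3}\in\mathbb C^N$ (components summing to zero). Here $\boldsymbol h_s$ has components $h_s^{(k)}=\delta_{sk}-1/N$. The fusion matrix is $F_{lj}(\boldsymbol\sigma',a,\boldsymbol\sigma)=\prod_{k\ne l}\frac{\sin\pi((a+1)/N+\sigma'^{(j)}-\sigma^{(k)})}{\sin\pi(\sigma^{(k)}-\sigma^{(l)})}$, with inverse $F^{-1}(\boldsymbol\sigma',a,\boldsymbol\sigma)=F(-\boldsymbol\sigma,a,-\boldsymbol\sigma')$. The braiding matrix is $B(\boldsymbol\sigma)=\operatorname{diag}(e^{i\pi\sigma^{(1)}},\ldots,e^{i\pi\sigma^{(N)}})$.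 The shift operator $\nabla_{\boldsymbol\sigma,s}$ acts on functions of $\boldsymbol\sigma$ by $\nabla_{\boldsymbol\sigma,s}\mathcal F(\boldsymbol\sigma)=\mathcal F(\boldsymbol\sigma+\boldsymbol h_s)$, and $\nabla_{\boldsymbol\sigma}=\operatorname{diag}(\nabla_{\boldsymbol\sigma,1},\ldots,\nabla_{\boldsymbol\sigma,N})$. Define \[ \hat V_{[k]} = B(-\boldsymbol{\theta}_{n-1}) F^{-1}(-\boldsymbol{\theta}_{n-1},a_{n-2}-1,\boldsymbol{\sigma}_{n-3}) \nabla_{\boldsymbol{\sigma}_{n-3}} F^{-1}(\boldsymbol{\sigma}_{n-3},a_{n-3},\boldsymbol{\sigma}_{n-4}) \nabla_{\boldsymbol{\sigma}_{n-4}} \cdots \nabla_{\boldsymbol{\sigma}_{k+1}} F^{-1}(\boldsymbol{\sigma}_{k+1},a_{k+1},\boldsymbol{\sigma}_{k}), \] and $\hat M_{[k]}=\hat V_{[k]}B^2(\boldsymbol\sigma_k)\hat V_{[k]}^{-1}$. This $\hat M_{[k]}$ is the operator-valued monodromy of the column of conformal blocks $\mathcal F_m(\boldsymbol\sigma|y)=C_m\langle -\boldsymbol\theta_{n-1}+\boldsymbol h_m|\Psi(y)V_{a_{n-2}}(z_{n-2})\mathcal P_{\boldsymbol\sigma_{n-3}}\cdots\mathcal P_{\boldsymbol\sigma_1}V_{a_1}(z_1)|\boldsymbol\theta_0\rangle$ (with $\Psi(y)$ the column of degenerate fields $\psi_j(y)$, $C_m=\operatorname{diag}((-1)^{N\delta_{jm}})$)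 under analytic continuation in $y$ along the loop encircling $z_0,\ldots,z_k$. *)

theory Defs
  imports "HOL-Analysis.Analysis"
begin

(* Configurations: sigma :: nat => complex^'n, sigma l = boldsymbol sigma_l (l = 1..n-3);
   N = CARD('n).  A column of functions of the sigma's: 'n cfg => complex^'n.
   Operator-valued N x N matrices are represented by the linear maps they induce on
   such columns; matrix product of operator matrices = composition. *)
type_synonym 'n cfg = "nat \<Rightarrow> complex^'n"
type_synonym 'n col = "'n cfg \<Rightarrow> complex^'n"
type_synonym 'n opr = "'n col \<Rightarrow> 'n col"

definition hvec :: "'n::finite \<Rightarrow> complex^'n" where
  "hvec s = (\<chi> k. (if k = s then 1 else 0) - 1 / of_nat CARD('n))"

definition shift1 :: "nat \<Rightarrow> 'n::finite \<Rightarrow> 'n opr" where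
  "shift1 l s G = (\<lambda>\<sigma>. G (\<sigma>(l := \<sigma> l + hvec s)))"

definition shift1_inv :: "nat \<Rightarrow> 'n::finite \<Rightarrow> 'n opr" where
  "shift1_inv l s G = (\<lambda>\<sigma>. G (\<sigma>(l := \<sigma> l - hvec s)))"

definition nabla :: "nat \<Rightarrow> 'n::finite opr" where
  "nabla l G = (\<lambda>\<sigma>. \<chi> j. G (\<sigma>(l := \<sigma> l + hvec j)) $ j)"

definition nabla_inv :: "nat \<Rightarrow> 'n::finite opr" where
  "nabla_inv l G = (\<lambda>\<sigma>. \<chi> j. G (\<sigma>(l := \<sigma> l - hvec j)) $ j)"

definition mulm :: "('n::finite cfg \<Rightarrow> complex^'n^'n) \<Rightarrow> 'n opr" where
  "mulm A G = (\<lambda>\<sigma>. A \<sigma> *v G \<sigma>)"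

definition Fmat :: "complex^'n::finite \<Rightarrow> complex \<Rightarrow> complex^'n \<Rightarrow> complex^'n^'n" where
  "Fmat \<sigma>' a \<sigma> = (\<chi> l j. \<Prod>k\<in>UNIV - {l}.
      sin (complex_of_real pi * ((a + 1) / of_nat CARD('n) + \<sigma>' $ j - \<sigma> $ k))
      / sin (complex_of_real pi * (\<sigma> $ k - \<sigma> $ l)))"

definition Finv :: "complex^'n::finite \<Rightarrow> complex \<Rightarrow> complex^'n \<Rightarrow> complex^'n^'n" where
  "Finv \<sigma>' a \<sigma> = Fmat (- \<sigma>) a (- \<sigma>')"

definition Bmat :: "complex^'n::finite \<Rightarrow> complex^'n^'n" where
  "Bmat \<sigma> = (\<chi> i j. if i = j then exp (\<i> * complex_of_real pi * \<sigma> $ i) else 0)"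

fun Wop :: "(nat \<Rightarrow> complex) \<Rightarrow> nat \<Rightarrow> nat \<Rightarrow> 'n::finite opr" where
  "Wop a k 0 = id"
| "Wop a k (Suc j) = (if Suc j \<le> k then id
     else nabla (Suc j) \<circ> mulm (\<lambda>\<sigma>. Finv (\<sigma> (Suc j)) (a (Suc j)) (\<sigma> j)) \<circ> Wop a k j)"

(* its inverse, using (F^{-1}(sigma',a,sigma))^{-1} = F(sigma',a,sigma) *)
fun Winv :: "(nat \<Rightarrow> complex) \<Rightarrow> nat \<Rightarrow> nat \<Rightarrow> 'n::finite opr" where
  "Winv a k 0 = id"
| "Winv a k (Suc j) = (if Suc j \<le> k then id
     else Winv a k j \<circ> mulm (\<lambda>\<sigma>. Fmat (\<sigma> (Suc j)) (a (Suc j)) (\<sigma> j)) \<circ> nabla_inv (Suc j))"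

(* hat V_[k]; theta = boldsymbol theta_{n-1} *)
definition Vhat :: "nat \<Rightarrow> nat \<Rightarrow> (nat \<Rightarrow> complex) \<Rightarrow> complex^'n::finite \<Rightarrow> 'n opr" where
  "Vhat n k a \<theta> = mulm (\<lambda>_. Bmat (- \<theta>))
      \<circ> mulm (\<lambda>\<sigma>. Finv (- \<theta>) (a (n - 2) - 1) (\<sigma> (n - 3))) \<circ> Wop a k (n - 3)"

definition Vhat_inv :: "nat \<Rightarrow> nat \<Rightarrow> (nat \<Rightarrow> complex) \<Rightarrow> complex^'n::finite \<Rightarrow> 'n opr" where
  "Vhat_inv n k a \<theta> = Winv a k (n - 3)
      \<circ> mulm (\<lambda>\<sigma>. Fmat (- \<theta>) (a (n - 2) - 1) (\<sigma> (n - 3))) \<circ> mulm (\<lambda>_. Bmat \<theta>)"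

definition Mhat :: "nat \<Rightarrow> nat \<Rightarrow> (nat \<Rightarrow> complex) \<Rightarrow> complex^'n::finite \<Rightarrow> 'n opr" where
  "Mhat n k a \<theta> = Vhat n k a \<theta> \<circ> mulm (\<lambda>\<sigma>. Bmat (\<sigma> k) ** Bmat (\<sigma> k)) \<circ> Vhat_inv n k a \<theta>"

end

theory Submission
  imports Defs
begin

definition sg :: "int \<Rightarrow> complex" where "sg n = (if even n then 1 else -1)"

lemma sg_minus: "sg (- a) = sg a" by (auto simp: sg_def)
lemma sg_sq: "sg a * sg a = 1" by (auto simp: sg_def)

lemma cos_int_pi: "cos (of_int n * complex_of_real pi) = sg n"
proof (cases "n \<ge> 0")
  case True
  define m where "m = nat n"
  then have "n = int m" using True by simp
  then show ?thesis using cos_npi_complex'[of m] by (auto simp: sg_def)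
next
  case False
  define m where "m = nat (- n)"
  then have m: "n = - int m" using False by simp
  have "cos (of_int n * complex_of_real pi) = cos (- (of_nat m * complex_of_real pi))"
    using m by simp
  also have "\<dots> = cos (of_nat m * complex_of_real pi)" by (rule cos_minus)
  finally have "cos (of_int n * complex_of_real pi) = cos (of_nat m * complex_of_real pi)" .
  then show ?thesis using cos_npi_complex'[of m] m by (auto simp: sg_def)
qed

lemma sin_int_pi: "sin (of_int n * complex_of_real pi) = 0"
proof (cases "n \<ge> 0")
  case True
  define m where "m = nat n"
  then have "n = int m" using True by simp
  then show ?thesis by simp
next
  case False
  define m where "m = nat (- n)"
  then have m: "n = - int m" using False by simp
  then show ?thesis by simp
qed

lemma sin_shift: "sin (z + of_int n * complex_of_real pi) = sg n * sin z"
  by (simp add: sin_add cos_int_pi sin_int_pi)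

definition eps :: "('n::finite \<Rightarrow> int) \<Rightarrow> 'n \<Rightarrow> complex" where
  "eps di i = sg (di i) ^ (CARD('n) - 1)"

definition Dm :: "('n::finite \<Rightarrow> int) \<Rightarrow> complex^'n^'n" where
  "Dm di = (\<chi> i j. if i = j then eps di i else 0)"

definition dvec :: "('n::finite \<Rightarrow> int) \<Rightarrow> complex^'n" where
  "dvec di = (\<chi> i. of_int (di i))"

definition Sop :: "('n::finite \<Rightarrow> int) \<Rightarrow> 'n opr" where
  "Sop di = mulm (\<lambda>_. Dm di)"

definition tau :: "nat \<Rightarrow> complex^'n::finite \<Rightarrow> 'n opr" where
  "tau l v G = (\<lambda>\<sigma>. G (\<sigma>(l := \<sigma> l + v)))"

lemma eps_sq: "eps di i * eps di i = 1"
  by (simp add: eps_def flip: power_mult_distrib) (simp add: sg_sq)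

lemma eps_neg: "eps (\<lambda>i. - di i) = eps di"
  by (rule ext) (simp add: eps_def sg_minus)

lemma Dm_neg: "Dm (\<lambda>i. - di i) = Dm di"
  unfolding Dm_def eps_neg ..

lemma dvec_nth: "dvec di $ i = of_int (di i)"
  by (simp add: dvec_def)

lemma delta_sum:
  fixes f :: "'n::finite \<Rightarrow> complex"
  shows "(\<Sum>k\<in>UNIV. (if i = k then a else 0) * f k) = (a * f i :: complex)"
proof -
  have "(\<Sum>k\<in>UNIV. (if i = k then a else 0) * f k) = (\<Sum>k\<in>UNIV. if i = k then a * f k else 0)"
    by (rule sum.cong) auto
  then show ?thesis by (simp add: sum.delta')
qed

lemma delta_sum2:
  fixes f :: "'n::finite \<Rightarrow> complex"
  shows "(\<Sum>k\<in>UNIV. f k * (if k = j then a k else 0)) = (f j * a j :: complex)"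
proof -
  have "(\<Sum>k\<in>UNIV. f k * (if k = j then a k else 0)) = (\<Sum>k\<in>UNIV. if k = j then f k * a k else 0)"
    by (rule sum.cong) auto
  then show ?thesis by (simp add: sum.delta)
qed

lemma dvec_neg: "- x - dvec di = - x + dvec (\<lambda>i. - di i)"
  by (simp add: dvec_def vec_eq_iff)

lemma Dm_mult: "(Dm di ** A) $ i $ j = eps di i * A $ i $ j"
  by (simp add: Dm_def matrix_matrix_mult_def delta_sum)

lemma mult_Dm: "(A ** Dm di) $ i $ j = A $ i $ j * eps di j"
  by (simp add: Dm_def matrix_matrix_mult_def delta_sum2)

lemma Dm_mulv: "(Dm di *v x) $ i = eps di i * x $ i"
  by (simp add: Dm_def matrix_vector_mult_def delta_sum)

lemma diag_mulv: "((\<chi> i j. if i = j then f i else 0) *v x) $ i = (f i * x $ i :: complex)"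
  by (simp add: matrix_vector_mult_def delta_sum)

lemma card_minus1: "card (UNIV - {l::'n::finite}) = CARD('n) - 1"
  by (simp add: card_Diff_singleton)

lemma Fmat_shift2:
  fixes x y :: "complex^'n::finite"
  shows "Fmat x c (y + dvec di) = Dm di ** Fmat x c y"
proof -
  have fac: "sin (complex_of_real pi * ((c + 1) / of_nat CARD('n) + x $ j - (y + dvec di) $ k))
      / sin (complex_of_real pi * ((y + dvec di) $ k - (y + dvec di) $ l))
    = sg (di l) * (sin (complex_of_real pi * ((c + 1) / of_nat CARD('n) + x $ j - y $ k))
      / sin (complex_of_real pi * (y $ k - y $ l)))" for j k l
  proof -
    have e1: "complex_of_real pi * ((c + 1) / of_nat CARD('n) + x $ j - (y + dvec di) $ k)
      = complex_of_real pi * ((c + 1) / of_nat CARD('n) + x $ j - y $ k) + of_int (- di k) * complex_of_real pi"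
      by (simp add: dvec_def algebra_simps)
    have e2: "complex_of_real pi * ((y + dvec di) $ k - (y + dvec di) $ l)
      = complex_of_real pi * (y $ k - y $ l) + of_int (di k - di l) * complex_of_real pi"
      by (simp add: dvec_def algebra_simps)
    have s: "sg (- di k) / sg (di k - di l) = sg (di l)"
      by (auto simp: sg_def)
    show ?thesis unfolding e1 e2 sin_shift
      by (simp add: s[symmetric])
  qed
  show ?thesis
    unfolding vec_eq_iff Dm_mult
  proof (intro allI)
    fix l j
    have "Fmat x c (y + dvec di) $ l $ j = (\<Prod>k\<in>UNIV - {l}. sg (di l) *
        (sin (complex_of_real pi * ((c + 1) / of_nat CARD('n) + x $ j - y $ k))
      / sin (complex_of_real pi * (y $ k - y $ l))))"
      unfolding Fmat_def vec_lambda_beta fac ..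
    also have "\<dots> = sg (di l) ^ (CARD('n) - 1) * (\<Prod>k\<in>UNIV - {l}.
        (sin (complex_of_real pi * ((c + 1) / of_nat CARD('n) + x $ j - y $ k))
      / sin (complex_of_real pi * (y $ k - y $ l))))"
      by (simp only: prod.distrib prod_constant card_minus1)
    also have "\<dots> = eps di l * Fmat x c y $ l $ j"
      unfolding eps_def Fmat_def vec_lambda_beta ..
    finally show "Fmat x c (y + dvec di) $ l $ j = eps di l * Fmat x c y $ l $ j" .
  qed
qed

lemma Fmat_shift1:
  fixes x y :: "complex^'n::finite"
  shows "Fmat (x + dvec di) c y = Fmat x c y ** Dm di"
proof -
  have fac: "sin (complex_of_real pi * ((c + 1) / of_nat CARD('n) + (x + dvec di) $ j - y $ k))
      / sin (complex_of_real pi * (y $ k - y $ l))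
    = sg (di j) * (sin (complex_of_real pi * ((c + 1) / of_nat CARD('n) + x $ j - y $ k))
      / sin (complex_of_real pi * (y $ k - y $ l)))" for j k l
  proof -
    have e1: "complex_of_real pi * ((c + 1) / of_nat CARD('n) + (x + dvec di) $ j - y $ k)
      = complex_of_real pi * ((c + 1) / of_nat CARD('n) + x $ j - y $ k) + of_int (di j) * complex_of_real pi"
      by (simp add: dvec_def algebra_simps)
    show ?thesis unfolding e1 sin_shift by simp
  qed
  show ?thesis
    unfolding vec_eq_iff mult_Dm
  proof (intro allI)
    fix l j
    have "Fmat (x + dvec di) c y $ l $ j = (\<Prod>k\<in>UNIV - {l}. sg (di j) *
        (sin (complex_of_real pi * ((c + 1) / of_nat CARD('n) + x $ j - y $ k))
      / sin (complex_of_real pi * (y $ k - y $ l))))"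
      unfolding Fmat_def vec_lambda_beta fac ..
    also have "\<dots> = sg (di j) ^ (CARD('n) - 1) * (\<Prod>k\<in>UNIV - {l}.
        (sin (complex_of_real pi * ((c + 1) / of_nat CARD('n) + x $ j - y $ k))
      / sin (complex_of_real pi * (y $ k - y $ l))))"
      by (simp only: prod.distrib prod_constant card_minus1)
    also have "\<dots> = Fmat x c y $ l $ j * eps di j"
      unfolding eps_def Fmat_def vec_lambda_beta by (rule mult.commute)
    finally show "Fmat (x + dvec di) c y $ l $ j = Fmat x c y $ l $ j * eps di j" .
  qed
qed

lemma Finv_shift1: "Finv (x + dvec di) c y = Dm di ** Finv x c y"
proof -
  have e: "- (x + dvec di) = - x + dvec (\<lambda>i. - di i)"
    by (simp add: vec_eq_iff dvec_nth)
  have "Finv (x + dvec di) c y = Fmat (- y) c (- x + dvec (\<lambda>i. - di i))"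
    unfolding Finv_def e ..
  also have "\<dots> = Dm (\<lambda>i. - di i) ** Fmat (- y) c (- x)"
    by (rule Fmat_shift2)
  also have "\<dots> = Dm di ** Finv x c y"
    unfolding Dm_neg Finv_def ..
  finally show ?thesis .
qed

lemma Finv_shift2: "Finv x c (y + dvec di) = Finv x c y ** Dm di"
proof -
  have e: "- (y + dvec di) = - y + dvec (\<lambda>i. - di i)"
    by (simp add: vec_eq_iff dvec_nth)
  have "Finv x c (y + dvec di) = Fmat (- y + dvec (\<lambda>i. - di i)) c (- x)"
    unfolding Finv_def e ..
  also have "\<dots> = Fmat (- y) c (- x) ** Dm (\<lambda>i. - di i)"
    by (rule Fmat_shift1)
  also have "\<dots> = Finv x c y ** Dm di"
    unfolding Dm_neg Finv_def ..
  finally show ?thesis .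
qed

lemma Bsq: "Bmat x ** Bmat x = (\<chi> i j. if i = j then exp (\<i> * complex_of_real pi * x $ i) * exp (\<i> * complex_of_real pi * x $ i) else 0)"
  by (simp add: vec_eq_iff Bmat_def matrix_matrix_mult_def delta_sum)

lemma exp_sq_shift: "exp (\<i> * complex_of_real pi * (y + of_int d)) * exp (\<i> * complex_of_real pi * (y + of_int d))
   = exp (\<i> * complex_of_real pi * y) * exp (\<i> * complex_of_real pi * y)"
proof -
  have "exp (\<i> * complex_of_real pi * (y + of_int d)) * exp (\<i> * complex_of_real pi * (y + of_int d))
      = exp (2 * \<i> * complex_of_real pi * y + \<i> * (of_int d * (of_real pi * 2)))"
    by (simp add: exp_add[symmetric] algebra_simps)
  also have "\<dots> = exp (2 * \<i> * complex_of_real pi * y)" by (rule exp_plus_2pin)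
  also have "\<dots> = exp (\<i> * complex_of_real pi * y) * exp (\<i> * complex_of_real pi * y)"
    by (simp add: exp_add[symmetric] algebra_simps)
  finally show ?thesis .
qed

lemma Bsq_shift: "Bmat (x + dvec di) ** Bmat (x + dvec di) = Bmat x ** Bmat x"
  unfolding Bsq vector_add_component dvec_nth exp_sq_shift by (rule refl)

lemma Sop_Sop: "Sop di (Sop di G) = G"
  by (rule ext) (simp add: Sop_def mulm_def vec_eq_iff Dm_mulv mult.assoc[symmetric] eps_sq)

lemma Sop_nabla: "Sop di (nabla j G) = nabla j (Sop di G)"
  by (rule ext) (simp add: Sop_def mulm_def nabla_def vec_eq_iff Dm_mulv)

lemma Sop_nabla_inv: "Sop di (nabla_inv j G) = nabla_inv j (Sop di G)"
  by (rule ext) (simp add: Sop_def mulm_def nabla_inv_def vec_eq_iff Dm_mulv)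

lemma Sop_B2: "Sop di (mulm (\<lambda>\<sigma>. Bmat (\<sigma> k) ** Bmat (\<sigma> k)) G)
   = mulm (\<lambda>\<sigma>. Bmat (\<sigma> k) ** Bmat (\<sigma> k)) (Sop di G)"
  by (rule ext) (simp add: Sop_def mulm_def vec_eq_iff Dm_mulv Bsq diag_mulv)

lemma mulm_Dl: "mulm (\<lambda>\<sigma>. Dm di ** A \<sigma>) G = Sop di (mulm A G)"
  by (simp add: Sop_def mulm_def matrix_vector_mul_assoc)

lemma mulm_Dr: "mulm (\<lambda>\<sigma>. A \<sigma> ** Dm di) G = mulm A (Sop di G)"
  by (simp add: Sop_def mulm_def matrix_vector_mul_assoc)

lemma tau_nabla: "tau l v (nabla j G) = nabla j (tau l v G)"
proof (rule ext)
  fix \<sigma> :: "'a::finite cfg"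
  have e: "(\<sigma>(j := \<sigma> j + hvec i))(l := (\<sigma>(j := \<sigma> j + hvec i)) l + v)
     = (\<sigma>(l := \<sigma> l + v))(j := (\<sigma>(l := \<sigma> l + v)) j + hvec i)" for i
    by (cases "l = j") (auto simp: fun_eq_iff algebra_simps)
  show "tau l v (nabla j G) \<sigma> = nabla j (tau l v G) \<sigma>"
    unfolding tau_def nabla_def e ..
qed

lemma tau_nabla_inv: "tau l v (nabla_inv j G) = nabla_inv j (tau l v G)"
proof (rule ext)
  fix \<sigma> :: "'a::finite cfg"
  have e: "(\<sigma>(j := \<sigma> j - hvec i))(l := (\<sigma>(j := \<sigma> j - hvec i)) l + v)
     = (\<sigma>(l := \<sigma> l + v))(j := (\<sigma>(l := \<sigma> l + v)) j - hvec i)" for i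
    by (cases "l = j") (auto simp: fun_eq_iff algebra_simps)
  show "tau l v (nabla_inv j G) \<sigma> = nabla_inv j (tau l v G) \<sigma>"
    unfolding tau_def nabla_inv_def e ..
qed

lemma tau_mulm: "tau l v (mulm A G) = mulm (\<lambda>\<sigma>. A (\<sigma>(l := \<sigma> l + v))) (tau l v G)"
  by (simp add: tau_def mulm_def)


lemma tau_Wop:
  fixes G :: "'n::finite col"
  shows "tau l (dvec di) (Wop a k j G) = (if l = j \<and> k < j then Sop di else id)
     (Wop a k j ((if l = k \<and> k < j then Sop di else id) (tau l (dvec di) G)))"
proof (induction j arbitrary: G)
  case 0
  show ?case by simp
next
  case (Suc j)
  show ?case
  proof (cases "Suc j \<le> k")
    case True
    then show ?thesis by simp
  next
    case False
    then have kj: "k \<le> j" by simp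
    define F :: "'n cfg \<Rightarrow> complex^'n^'n" where "F = (\<lambda>\<sigma>. Finv (\<sigma> (Suc j)) (a (Suc j)) (\<sigma> j))"
    have W: "Wop a k (Suc j) H = nabla (Suc j) (mulm F (Wop a k j H))" for H
      using False by (simp add: F_def)
    have T: "tau l (dvec di) (Wop a k (Suc j) G)
        = nabla (Suc j) (mulm (\<lambda>\<sigma>. F (\<sigma>(l := \<sigma> l + dvec di))) (tau l (dvec di) (Wop a k j G)))"
      unfolding W tau_nabla tau_mulm ..
    consider "l = Suc j" | "l = j" "k < j" | "l = j" "k = j" | "l \<noteq> j" "l \<noteq> Suc j"
      using kj by linarith
    then show ?thesis
    proof cases
      case 1
      have FF: "(\<lambda>\<sigma>. F (\<sigma>(l := \<sigma> l + dvec di))) = (\<lambda>\<sigma>. Dm di ** F \<sigma>)"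
        using 1 by (simp add: F_def Finv_shift1)
      have IH: "tau l (dvec di) (Wop a k j H) = Wop a k j (tau l (dvec di) H)" for H
        using Suc.IH[of H] 1 kj by simp
      have c: "(l = Suc j \<and> k < Suc j) = True" "(l = k \<and> k < Suc j) = False"
        using 1 kj by auto
      show ?thesis unfolding T FF IH
        by (simp only: c if_True if_False id_apply W mulm_Dl Sop_nabla)
    next
      case 2
      have FF: "(\<lambda>\<sigma>. F (\<sigma>(l := \<sigma> l + dvec di))) = (\<lambda>\<sigma>. F \<sigma> ** Dm di)"
        using 2 by (simp add: F_def Finv_shift2)
      have IH: "tau l (dvec di) (Wop a k j H) = Sop di (Wop a k j (tau l (dvec di) H))" for H
        using Suc.IH[of H] 2 kj by simp
      have c: "(l = Suc j \<and> k < Suc j) = False" "(l = k \<and> k < Suc j) = False"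
        using 2 kj by auto
      show ?thesis unfolding T FF IH
        by (simp only: c if_True if_False id_apply W mulm_Dr Sop_Sop)
    next
      case 3
      have FF: "(\<lambda>\<sigma>. F (\<sigma>(l := \<sigma> l + dvec di))) = (\<lambda>\<sigma>. F \<sigma> ** Dm di)"
        using 3 by (simp add: F_def Finv_shift2)
      have IH: "tau l (dvec di) (Wop a k j H) = Wop a k j (tau l (dvec di) H)" for H
        using Suc.IH[of H] 3 kj by simp
      have Wid: "Wop a k j H = H" for H :: "'n col" using 3
        by (cases j) auto
      have c: "(l = Suc j \<and> k < Suc j) = False" "(l = k \<and> k < Suc j) = True"
        using 3 kj by auto
      show ?thesis unfolding T FF IH
        by (simp only: c if_True if_False id_apply W mulm_Dr Wid)
    next
      case 4
      have FF: "(\<lambda>\<sigma>. F (\<sigma>(l := \<sigma> l + dvec di))) = F"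
        using 4 by (simp add: F_def)
      have IH: "tau l (dvec di) (Wop a k j H)
          = Wop a k j ((if l = k \<and> k < Suc j then Sop di else id) (tau l (dvec di) H))" for H
      proof -
        have c2: "(l = k \<and> k < j) = (l = k \<and> k < Suc j)" using 4 kj by auto
        show ?thesis using Suc.IH[of H] 4 unfolding c2 by simp
      qed
      have c: "(l = Suc j \<and> k < Suc j) = False"
        using 4 kj by auto
      show ?thesis unfolding T FF IH
        by (simp only: c if_True if_False id_apply W id_def)
    qed
  qed
qed

lemma tau_Winv:
  fixes G :: "'n::finite col"
  shows "tau l (dvec di) (Winv a k j G) = (if l = k \<and> k < j then Sop di else id)
     (Winv a k j ((if l = j \<and> k < j then Sop di else id) (tau l (dvec di) G)))"
proof (induction j arbitrary: G)
  case 0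
  show ?case by simp
next
  case (Suc j)
  show ?case
  proof (cases "Suc j \<le> k")
    case True
    then show ?thesis by simp
  next
    case False
    then have kj: "k \<le> j" by simp
    define F :: "'n cfg \<Rightarrow> complex^'n^'n" where "F = (\<lambda>\<sigma>. Fmat (\<sigma> (Suc j)) (a (Suc j)) (\<sigma> j))"
    have W: "Winv a k (Suc j) H = Winv a k j (mulm F (nabla_inv (Suc j) H))" for H
      using False by (simp add: F_def)
    have T: "tau l (dvec di) (Winv a k (Suc j) G) = tau l (dvec di) (Winv a k j (mulm F (nabla_inv (Suc j) G)))"
      unfolding W ..
    have TT: "tau l (dvec di) (mulm F (nabla_inv (Suc j) G))
       = mulm (\<lambda>\<sigma>. F (\<sigma>(l := \<sigma> l + dvec di))) (nabla_inv (Suc j) (tau l (dvec di) G))"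
      unfolding tau_mulm tau_nabla_inv ..
    consider "l = Suc j" | "l = j" "k < j" | "l = j" "k = j" | "l \<noteq> j" "l \<noteq> Suc j"
      using kj by linarith
    then show ?thesis
    proof cases
      case 1
      have FF: "(\<lambda>\<sigma>. F (\<sigma>(l := \<sigma> l + dvec di))) = (\<lambda>\<sigma>. F \<sigma> ** Dm di)"
        using 1 by (simp add: F_def Fmat_shift1)
      have IH: "tau l (dvec di) (Winv a k j H) = Winv a k j (tau l (dvec di) H)" for H
        using Suc.IH[of H] 1 kj by simp
      have c: "(l = Suc j \<and> k < Suc j) = True" "(l = k \<and> k < Suc j) = False"
        using 1 kj by auto
      show ?thesis unfolding T IH TT FF
        by (simp only: c if_True if_False id_apply W mulm_Dr Sop_nabla_inv)
    next
      case 2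
      have FF: "(\<lambda>\<sigma>. F (\<sigma>(l := \<sigma> l + dvec di))) = (\<lambda>\<sigma>. Dm di ** F \<sigma>)"
        using 2 by (simp add: F_def Fmat_shift2)
      have IH: "tau l (dvec di) (Winv a k j H) = Winv a k j (Sop di (tau l (dvec di) H))" for H
        using Suc.IH[of H] 2 kj by simp
      have c: "(l = Suc j \<and> k < Suc j) = False" "(l = k \<and> k < Suc j) = False"
        using 2 kj by auto
      show ?thesis unfolding T IH TT FF
        by (simp only: c if_True if_False id_apply W mulm_Dl Sop_Sop)
    next
      case 3
      have FF: "(\<lambda>\<sigma>. F (\<sigma>(l := \<sigma> l + dvec di))) = (\<lambda>\<sigma>. Dm di ** F \<sigma>)"
        using 3 by (simp add: F_def Fmat_shift2)
      have IH: "tau l (dvec di) (Winv a k j H) = Winv a k j (tau l (dvec di) H)" for H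
        using Suc.IH[of H] 3 kj by simp
      have Wid: "Winv a k j H = H" for H :: "'n col" using 3
        by (cases j) auto
      have c: "(l = Suc j \<and> k < Suc j) = False" "(l = k \<and> k < Suc j) = True"
        using 3 kj by auto
      show ?thesis unfolding T IH TT FF
        by (simp only: c if_True if_False id_apply W mulm_Dl Wid)
    next
      case 4
      have FF: "(\<lambda>\<sigma>. F (\<sigma>(l := \<sigma> l + dvec di))) = F"
        using 4 by (simp add: F_def)
      have IH: "tau l (dvec di) (Winv a k j H)
          = (if l = k \<and> k < Suc j then Sop di else id) (Winv a k j (tau l (dvec di) H))" for H
      proof -
        have c2: "(l = k \<and> k < j) = (l = k \<and> k < Suc j)" using 4 kj by auto
        show ?thesis using Suc.IH[of H] 4 unfolding c2 by simp
      qed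
      have c: "(l = Suc j \<and> k < Suc j) = False"
        using 4 kj by auto
      show ?thesis unfolding T IH TT FF
        by (simp only: c if_True if_False id_apply W id_def)
    qed
  qed
qed

lemma tau_Vhat:
  fixes G :: "'n::finite col"
  assumes "k \<le> n - 3" "l \<le> n - 3"
  shows "tau l (dvec di) (Vhat n k a \<theta> G) = Vhat n k a \<theta> ((if l = k then Sop di else id) (tau l (dvec di) G))"
proof -
  define p where "p = n - 3"
  define F :: "'n cfg \<Rightarrow> complex^'n^'n" where "F = (\<lambda>\<sigma>. Finv (- \<theta>) (a (n - 2) - 1) (\<sigma> p))"
  have V: "Vhat n k a \<theta> H = mulm (\<lambda>_. Bmat (- \<theta>)) (mulm F (Wop a k p H))" for H
    by (simp add: Vhat_def F_def p_def)
  have T: "tau l (dvec di) (Vhat n k a \<theta> G) = mulm (\<lambda>_. Bmat (- \<theta>))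
      (mulm (\<lambda>\<sigma>. F (\<sigma>(l := \<sigma> l + dvec di))) ((if l = p \<and> k < p then Sop di else id)
     (Wop a k p ((if l = k \<and> k < p then Sop di else id) (tau l (dvec di) G)))))"
    by (simp add: V tau_mulm tau_Wop)
  have kp: "k \<le> p" "l \<le> p" using assms by (auto simp: p_def)
  consider "l = p" "k < p" | "l = p" "k = p" | "l \<noteq> p" using kp by linarith
  then show ?thesis
  proof cases
    case 1
    have FF: "(\<lambda>\<sigma>. F (\<sigma>(l := \<sigma> l + dvec di))) = (\<lambda>\<sigma>. F \<sigma> ** Dm di)"
      using 1 by (simp add: F_def Finv_shift2)
    show ?thesis using 1 unfolding T FF by (simp add: V mulm_Dr Sop_Sop)
  next
    case 2
    have FF: "(\<lambda>\<sigma>. F (\<sigma>(l := \<sigma> l + dvec di))) = (\<lambda>\<sigma>. F \<sigma> ** Dm di)"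
      using 2 by (simp add: F_def Finv_shift2)
    have Wid: "Wop a k p H = H" for H :: "'n col" using 2
      by (cases p) auto
    have c1: "(l = p \<and> k < p) = False" "(l = k \<and> k < p) = False" "(l = k) = True" "(k < p) = False"
      using 2 by auto
    show ?thesis unfolding T FF by (simp only: c1 simp_thms if_True if_False id_apply mulm_Dr Wid V)
  next
    case 3
    have FF: "(\<lambda>\<sigma>. F (\<sigma>(l := \<sigma> l + dvec di))) = F"
      using 3 by (simp add: F_def)
    have c: "(l = k \<and> k < p) = (l = k)" using 3 kp by auto
    show ?thesis using 3 unfolding T FF by (simp add: V c)
  qed
qed

lemma tau_Vhat_inv:
  fixes G :: "'n::finite col"
  assumes "k \<le> n - 3" "l \<le> n - 3"
  shows "tau l (dvec di) (Vhat_inv n k a \<theta> G) = (if l = k then Sop di else id) (Vhat_inv n k a \<theta> (tau l (dvec di) G))"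
proof -
  define p where "p = n - 3"
  define F :: "'n cfg \<Rightarrow> complex^'n^'n" where "F = (\<lambda>\<sigma>. Fmat (- \<theta>) (a (n - 2) - 1) (\<sigma> p))"
  have V: "Vhat_inv n k a \<theta> H = Winv a k p (mulm F (mulm (\<lambda>_. Bmat \<theta>) H))" for H
    by (simp add: Vhat_inv_def F_def p_def)
  have T: "tau l (dvec di) (Vhat_inv n k a \<theta> G) = (if l = k \<and> k < p then Sop di else id)
     (Winv a k p ((if l = p \<and> k < p then Sop di else id)
      (mulm (\<lambda>\<sigma>. F (\<sigma>(l := \<sigma> l + dvec di))) (mulm (\<lambda>_. Bmat \<theta>) (tau l (dvec di) G)))))"
    by (simp add: V tau_mulm tau_Winv)
  have kp: "k \<le> p" "l \<le> p" using assms by (auto simp: p_def)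
  consider "l = p" "k < p" | "l = p" "k = p" | "l \<noteq> p" using kp by linarith
  then show ?thesis
  proof cases
    case 1
    have FF: "(\<lambda>\<sigma>. F (\<sigma>(l := \<sigma> l + dvec di))) = (\<lambda>\<sigma>. Dm di ** F \<sigma>)"
      using 1 by (simp add: F_def Fmat_shift2)
    show ?thesis using 1 unfolding T FF by (simp add: V mulm_Dl Sop_Sop)
  next
    case 2
    have FF: "(\<lambda>\<sigma>. F (\<sigma>(l := \<sigma> l + dvec di))) = (\<lambda>\<sigma>. Dm di ** F \<sigma>)"
      using 2 by (simp add: F_def Fmat_shift2)
    have Wid: "Winv a k p H = H" for H :: "'n col" using 2
      by (cases p) auto
    have c1: "(l = p \<and> k < p) = False" "(l = k \<and> k < p) = False" "(l = k) = True" "(k < p) = False"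
      using 2 by auto
    show ?thesis unfolding T FF by (simp only: c1 simp_thms if_True if_False id_apply mulm_Dl Wid V)
  next
    case 3
    have FF: "(\<lambda>\<sigma>. F (\<sigma>(l := \<sigma> l + dvec di))) = F"
      using 3 by (simp add: F_def)
    have c: "(l = k \<and> k < p) = (l = k)" using 3 kp by auto
    show ?thesis using 3 unfolding T FF by (simp add: V c)
  qed
qed

lemma tau_Mhat:
  fixes G :: "'n::finite col"
  assumes "k \<le> n - 3" "l \<le> n - 3"
  shows "tau l (dvec di) (Mhat n k a \<theta> G) = Mhat n k a \<theta> (tau l (dvec di) G)"
proof -
  define B :: "'n cfg \<Rightarrow> complex^'n^'n" where "B = (\<lambda>\<sigma>. Bmat (\<sigma> k) ** Bmat (\<sigma> (k::nat)))"
  have M: "Mhat n k a \<theta> H = Vhat n k a \<theta> (mulm B (Vhat_inv n k a \<theta> H))" for H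
    by (simp add: Mhat_def B_def)
  have BB: "(\<lambda>\<sigma>. B (\<sigma>(l := \<sigma> l + dvec di))) = B"
    by (rule ext) (simp add: B_def Bsq_shift)
  have SB: "Sop di (mulm B H) = mulm B (Sop di H)" for H
    unfolding B_def by (rule Sop_B2)
  show ?thesis
    unfolding M tau_Vhat[OF assms] tau_mulm BB tau_Vhat_inv[OF assms]
    by (simp add: SB Sop_Sop)
qed

theorem proposition4p4:
  fixes n k l :: nat and m s :: "'n::finite" and a :: "nat \<Rightarrow> complex"
    and \<theta> :: "complex^'n" and G :: "'n col" and \<sigma> :: "'n cfg"
  assumes "CARD('n) \<ge> 2" and "4 \<le> n"
    and "1 \<le> k" and "k \<le> n - 3"
    and "1 \<le> l" and "l \<le> n - 3"
    and "(\<Sum>i\<in>UNIV. \<theta> $ i) = 0"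
    and "\<forall>j\<in>{1..n-3}. (\<Sum>i\<in>UNIV. \<sigma> j $ i) = 0"
  shows "shift1 l m (shift1_inv l s (Mhat n k a \<theta> G)) \<sigma>
       = Mhat n k a \<theta> (shift1 l m (shift1_inv l s G)) \<sigma>"
proof -
  define di where "di = (\<lambda>i. (if i = m then 1 else 0) - (if i = s then 1 else (0::int)))"
  have hv: "hvec m - hvec s = dvec di"
    by (simp add: vec_eq_iff hvec_def di_def dvec_nth)
  have sh: "shift1 l m (shift1_inv l s H) = tau l (dvec di) H" for H :: "'n col"
    by (rule ext) (simp add: shift1_def shift1_inv_def tau_def flip: hv, simp add: algebra_simps)
  show ?thesis unfolding sh tau_Mhat[OF assms(4,6)] ..
qed

end
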